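(* Let $X,Y$ be sets and consider multirelations $X\leftrightarrow\mathcal{P}Y$. (1) For inner deterministic $R,S$: $R\sqsubseteq_\downarrow S\iff R\subseteq S$ and $R\sqsubseteq_\uparrow S\iff S\subseteq R$; consequently $R\sqsubseteq_\updownarrow S\iff R=S$. (2) $\sqsubseteq_\updownarrow$ is antisymmetric (hence a partial order) on the set of inner univalent multirelations. (3) $\sqsubseteq_\downarrow$, $\sqsubseteq_\uparrow$ and $\sqsubseteq_\updownarrow$ are antisymmetric (hence partial orders) on the set of outer univalent multirelations. (4) On outer deterministic multirelations these three partial orders coincide: for outer deterministic $R,S$, $R\sqsubseteq_\downarrow S\iff R\sqsubseteq_\uparrow S\iff R\sqsubseteq_\updownarrow S$.
   Context: $R^{\uparrow}=\{(a,A)\mid\exists B.(a,B)\in R\wedge B\subseteq A\}$, $R^{\downarrow}=\{(a,A)\mid\exists B.(a,B)\in R\wedge A\subseteq B\}$. $R\sqsubseteq_\uparrow S\iff S\subseteq R^{\uparrow}$; $R\sqsubseteq_\downarrow S\iff R\subseteq S^{\downarrow}$; $R\sqsubseteq_\updownarrow S\iff R\sqsubseteq_\downarrow S\wedge R\sqsubseteq_\uparrow S$. A multirelation $R$ is inner univalent if every $(a,B)\in R$ has $B$ empty or a singleton, inner deterministic if every $(a,B)\in R$ has $B$ a singleton; outer univalent if for each $a\in X$ there is at most one $B$ with $(a,B)\in R$, outer deterministic if for each $a\in X$ there is exactly one such $B$. *)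

theory Defs
  imports Main
begin

type_synonym ('a, 'b) mrel = "('a \<times> 'b set) set"

definition up_closure :: "('a, 'b) mrel \<Rightarrow> ('a, 'b) mrel" where
  "up_closure R = {(a, A). \<exists>B. (a, B) \<in> R \<and> B \<subseteq> A}"

definition down_closure :: "('a, 'b) mrel \<Rightarrow> ('a, 'b) mrel" where
  "down_closure R = {(a, A). \<exists>B. (a, B) \<in> R \<and> A \<subseteq> B}"

definition ref_up :: "('a, 'b) mrel \<Rightarrow> ('a, 'b) mrel \<Rightarrow> bool" where
  "ref_up R S \<longleftrightarrow> S \<subseteq> up_closure R"

definition ref_down :: "('a, 'b) mrel \<Rightarrow> ('a, 'b) mrel \<Rightarrow> bool" where
  "ref_down R S \<longleftrightarrow> R \<subseteq> down_closure S"

definition ref_updown :: "('a, 'b) mrel \<Rightarrow> ('a, 'b) mrel \<Rightarrow> bool" where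
  "ref_updown R S \<longleftrightarrow> ref_down R S \<and> ref_up R S"

definition inner_univalent :: "('a, 'b) mrel \<Rightarrow> bool" where
  "inner_univalent R \<longleftrightarrow> (\<forall>(a, B) \<in> R. B = {} \<or> (\<exists>b. B = {b}))"

definition inner_deterministic :: "('a, 'b) mrel \<Rightarrow> bool" where
  "inner_deterministic R \<longleftrightarrow> (\<forall>(a, B) \<in> R. \<exists>b. B = {b})"

definition outer_univalent :: "('a, 'b) mrel \<Rightarrow> bool" where
  "outer_univalent R \<longleftrightarrow> (\<forall>a. \<forall>B C. (a, B) \<in> R \<and> (a, C) \<in> R \<longrightarrow> B = C)"

definition outer_deterministic :: "('a, 'b) mrel \<Rightarrow> bool" where
  "outer_deterministic R \<longleftrightarrow> (\<forall>a. \<exists>!B. (a, B) \<in> R)"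

end

theory Submission
  imports Defs
begin

theorem proposition5p8:
  shows
  "(\<forall>R S :: ('a, 'b) mrel. inner_deterministic R \<and> inner_deterministic S \<longrightarrow>
        (ref_down R S \<longleftrightarrow> R \<subseteq> S) \<and> (ref_up R S \<longleftrightarrow> S \<subseteq> R) \<and> (ref_updown R S \<longleftrightarrow> R = S))
   \<and> (\<forall>R S :: ('a, 'b) mrel. inner_univalent R \<and> inner_univalent S \<and> ref_updown R S \<and> ref_updown S R \<longrightarrow> R = S)
   \<and> (\<forall>R S :: ('a, 'b) mrel. outer_univalent R \<and> outer_univalent S \<longrightarrow>
        (ref_down R S \<and> ref_down S R \<longrightarrow> R = S) \<and>
        (ref_up R S \<and> ref_up S R \<longrightarrow> R = S) \<and>
        (ref_updown R S \<and> ref_updown S R \<longrightarrow> R = S))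
   \<and> (\<forall>R S :: ('a, 'b) mrel. outer_deterministic R \<and> outer_deterministic S \<longrightarrow>
        (ref_down R S \<longleftrightarrow> ref_up R S) \<and> (ref_up R S \<longleftrightarrow> ref_updown R S))"
proof (intro conjI allI impI)
  fix R S :: "('a,'b) mrel"
  assume h: "inner_deterministic R \<and> inner_deterministic S"
  show d: "ref_down R S \<longleftrightarrow> R \<subseteq> S"
    using h unfolding ref_down_def down_closure_def inner_deterministic_def
    by (auto; fastforce)
  show u: "ref_up R S \<longleftrightarrow> S \<subseteq> R"
    using h unfolding ref_up_def up_closure_def inner_deterministic_def
    by (auto; fastforce)
  show "ref_updown R S \<longleftrightarrow> R = S" using d u unfolding ref_updown_def by blast
next
  fix R S :: "('a,'b) mrel"
  assume h: "inner_univalent R \<and> inner_univalent S \<and> ref_updown R S \<and> ref_updown S R"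
  have k: "X \<subseteq> Y" if "inner_univalent X" "inner_univalent Y" "X \<subseteq> down_closure Y" "X \<subseteq> up_closure Y" for X Y :: "('a,'b) mrel"
  proof
    fix p assume p: "p \<in> X"
    obtain a B where pa: "p = (a,B)" by (cases p)
    from that(1) p pa have "B = {} \<or> (\<exists>b. B = {b})" unfolding inner_univalent_def by blast
    then show "p \<in> Y"
    proof
      assume "B = {}"
      with that(4) p pa obtain C where "(a,C) \<in> Y" "C \<subseteq> {}" unfolding up_closure_def by blast
      then show ?thesis using pa \<open>B = {}\<close> by simp
    next
      assume "\<exists>b. B = {b}"
      then obtain b where b: "B = {b}" by blast
      with that(3) p pa obtain C where C: "(a,C) \<in> Y" "{b} \<subseteq> C" unfolding down_closure_def by blast
      with that(2) have "C = {b}" unfolding inner_univalent_def by blast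
      then show ?thesis using C pa b by simp
    qed
  qed
  show "R = S" using h k[of R S] k[of S R] unfolding ref_updown_def ref_up_def ref_down_def by blast
next
  fix R S :: "('a,'b) mrel"
  assume h: "outer_univalent R \<and> outer_univalent S"
  have kd: "X \<subseteq> Y" if "outer_univalent X" "X \<subseteq> down_closure Y" "Y \<subseteq> down_closure X" for X Y :: "('a,'b) mrel"
  proof
    fix p assume p: "p \<in> X"
    obtain a B where pa: "p = (a,B)" by (cases p)
    with that(2) p obtain C where C: "(a,C) \<in> Y" "B \<subseteq> C" unfolding down_closure_def by blast
    with that(3) obtain D where D: "(a,D) \<in> X" "C \<subseteq> D" unfolding down_closure_def by blast
    with that(1) p pa have "D = B" unfolding outer_univalent_def by blast
    then show "p \<in> Y" using C D pa by auto
  qed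
  have ku: "X \<subseteq> Y" if "outer_univalent X" "X \<subseteq> up_closure Y" "Y \<subseteq> up_closure X" for X Y :: "('a,'b) mrel"
  proof
    fix p assume p: "p \<in> X"
    obtain a B where pa: "p = (a,B)" by (cases p)
    with that(2) p obtain C where C: "(a,C) \<in> Y" "C \<subseteq> B" unfolding up_closure_def by blast
    with that(3) obtain D where D: "(a,D) \<in> X" "D \<subseteq> C" unfolding up_closure_def by blast
    with that(1) p pa have "D = B" unfolding outer_univalent_def by blast
    then show "p \<in> Y" using C D pa by auto
  qed
  show "R = S" if "ref_down R S \<and> ref_down S R"
    using h kd[of R S] kd[of S R] using that unfolding ref_down_def by blast
  show "R = S" if "ref_up R S \<and> ref_up S R"
    using h ku[of R S] ku[of S R] using that unfolding ref_up_def by blast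
  show "R = S" if "ref_updown R S \<and> ref_updown S R"
    using h kd[of R S] kd[of S R] using that unfolding ref_down_def ref_updown_def by blast
next
  fix R S :: "('a,'b) mrel"
  assume h: "outer_deterministic R \<and> outer_deterministic S"
  have e: "ref_down R S \<longleftrightarrow> ref_up R S"
  proof
    assume a: "ref_down R S"
    show "ref_up R S" unfolding ref_up_def up_closure_def
    proof (clarify)
      fix x C assume xC: "(x,C) \<in> S"
      from h obtain B where B: "(x,B) \<in> R" unfolding outer_deterministic_def by blast
      with a obtain D where "(x,D) \<in> S" "B \<subseteq> D" unfolding ref_down_def down_closure_def by blast
      with h xC have "B \<subseteq> C" unfolding outer_deterministic_def by blast
      then show "\<exists>B. (x, B) \<in> R \<and> B \<subseteq> C" using B by blast
    qed
  next
    assume a: "ref_up R S"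
    show "ref_down R S" unfolding ref_down_def down_closure_def
    proof (clarify)
      fix x B assume xB: "(x,B) \<in> R"
      from h obtain C where C: "(x,C) \<in> S" unfolding outer_deterministic_def by blast
      with a obtain D where "(x,D) \<in> R" "D \<subseteq> C" unfolding ref_up_def up_closure_def by blast
      with h xB have "B \<subseteq> C" unfolding outer_deterministic_def by blast
      then show "\<exists>C. (x, C) \<in> S \<and> B \<subseteq> C" using C by blast
    qed
  qed
  show "ref_down R S \<longleftrightarrow> ref_up R S" by (rule e)
  show "ref_up R S \<longleftrightarrow> ref_updown R S" using e unfolding ref_updown_def by blast
qed

end
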